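(* Let $g\in\mathcal{G}_0$ and let $(X,\Sigma,\mu)$ be a probability space. Let $\mathcal{P}$ be a finite measurable partition of $X$ containing a set $E$ with $0<\mu(E)<1$, and let $F\in\Sigma$. Then $$H(g,\mathcal{P})\ge H_F(g,\mathcal{P})-|g'_-(1/2)|-d_{\max},$$ where $g'_-(1/2)$ is the left derivative of $g$ at $1/2$ and $d_{\max}=\sup_{x,y\in[0,1]}|g(x)-g(y)|$.
   Context: $\mathcal{G}_0$ is the set of concave functions $g:[0,1]\to\mathbb{R}$ with $g(0)=\lim_{x\to0^+}g(x)=0$. $H(g,\mathcal{P})=\sum_{A\in\mathcal{P}}g(\mu(A))$. The $g$-entropy of $\mathcal{P}$ restricted to $F$ is $H_F(g,\mathcal{P})=\sum_{B\in\mathcal{P}}g(\mu(B\cap F))$. *)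

theory Defs
  imports "HOL-Analysis.Analysis" "HOL-Probability.Probability"
begin

definition G0 :: "(real \<Rightarrow> real) set" where
  "G0 = {g. concave_on {0..1} g \<and> g 0 = 0 \<and> (g \<longlongrightarrow> 0) (at_right 0)}"

definition finite_meas_partition :: "'a measure \<Rightarrow> 'a set set \<Rightarrow> bool" where
  "finite_meas_partition M P \<longleftrightarrow> finite P \<and> P \<subseteq> sets M \<and> disjoint P \<and> \<Union>P = space M"

definition g_entropy :: "(real \<Rightarrow> real) \<Rightarrow> 'a measure \<Rightarrow> 'a set set \<Rightarrow> real" where
  "g_entropy g M P = (\<Sum>A\<in>P. g (measure M A))"

definition g_entropy_restr :: "(real \<Rightarrow> real) \<Rightarrow> 'a measure \<Rightarrow> 'a set \<Rightarrow> 'a set set \<Rightarrow> real" where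
  "g_entropy_restr g M F P = (\<Sum>B\<in>P. g (measure M (B \<inter> F)))"

definition left_deriv :: "(real \<Rightarrow> real) \<Rightarrow> real \<Rightarrow> real" where
  "left_deriv g x = Lim (at_left x) (\<lambda>y. (g y - g x) / (y - x))"

definition d_max :: "(real \<Rightarrow> real) \<Rightarrow> real" where
  "d_max g = (SUP p \<in> {0..1} \<times> {0..1}. \<bar>g (fst p) - g (snd p)\<bar>)"

end

theory Submission
  imports Defs
begin

lemma at_half: "at (1/2::real) within {0..<1/2} = at_left (1/2)"
proof -
  have "at (1/2::real) within {0..<1/2} = at (1/2) within {0..1/2}"
    unfolding at_within_def by (rule arg_cong[where f="\<lambda>S. inf _ (principal S)"]) auto
  also have "\<dots> = at_left (1/2)" by (rule at_within_Icc_at_left) simp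
  finally show ?thesis .
qed

lemma key:
  fixes g :: "real \<Rightarrow> real"
  assumes cv: "concave_on {0..1} g" and y: "0 \<le> y" "y \<le> x" "x \<le> 1/2"
  shows "left_deriv g (1/2) * (x - y) \<le> g x - g y"
proof -
  define f where "f = (\<lambda>t. - g t)"
  have fc: "convex_on {0..1} f" using cv unfolding f_def concave_on_def .
  define q where "q = (\<lambda>t. (g t - g (1/2)) / (t - 1/2))"
  have qf: "q t = - ((f t - f (1/2)) / (t - 1/2))" for t unfolding q_def f_def by (simp add: minus_divide_left)
  have mono: "-q a \<le> -q b" if "a \<in> {0..}" "b \<in> {0..}" "b < 1/2" "a \<le> b" for a b
  proof (cases "a = b")
    case False
    then show ?thesis using convex_on_slope_le(2)[OF fc, of a "1/2" b] that unfolding qf by auto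
  qed simp
  have bnd: "-q b \<le> (f (1/2) - f 1) / (1/2 - 1)" if "b \<in> {0..}" "b < 1/2" for b
  proof -
    have "(f b - f (1/2)) / (b - 1/2) \<le> (f b - f 1) / (b - 1)"
      using convex_on_slope_le(1)[OF fc, of b 1 "1/2"] that by auto
    also have "\<dots> \<le> (f (1/2) - f 1) / (1/2 - 1)"
      using convex_on_slope_le(2)[OF fc, of b 1 "1/2"] that by auto
    finally show ?thesis unfolding qf by simp
  qed
  have lim: "((\<lambda>t. - q t) \<longlongrightarrow> Sup ((\<lambda>t. - q t) ` ({..<1/2} \<inter> {0..}))) (at (1/2) within ({..<1/2} \<inter> {0..}))"
    by (rule Lim_left_bound[where I="{0..}" and K="(f (1/2) - f 1) / (1/2 - 1)"]) (use mono bnd in auto)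
  have e: "{..<1/2} \<inter> {0..} = {0..<(1/2::real)}" by auto
  from lim have "((\<lambda>t. - (- q t)) \<longlongrightarrow> - Sup ((\<lambda>t. - q t) ` ({..<1/2} \<inter> {0..}))) (at_left (1/2))"
    unfolding e at_half by (intro tendsto_minus)
  then have lq: "(q \<longlongrightarrow> - Sup ((\<lambda>t. - q t) ` ({..<1/2} \<inter> {0..}))) (at_left (1/2))" by simp
  have L: "left_deriv g (1/2) = - Sup ((\<lambda>t. - q t) ` ({..<1/2} \<inter> {0..}))"
    unfolding left_deriv_def using tendsto_Lim[OF _ lq] q_def by simp
  show ?thesis
  proof (cases "y = x")
    case True then show ?thesis by simp
  next
    case False
    then have yx: "y < x" using y by simp
    have Lq: "left_deriv g (1/2) \<le> q y"
    proof -
      have "left_deriv g (1/2) \<le> q y"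
        unfolding L
      proof (rule tendsto_upperbound[OF lq])
        have "\<forall>\<^sub>F t in at_left (1/2). t \<in> {y<..<1/2}"
          using yx y by (intro eventually_at_left_real) auto
        then show "\<forall>\<^sub>F t in at_left (1/2). q t \<le> q y"
        proof (rule eventually_mono)
          fix t assume "t \<in> {y<..<1/2}"
          then show "q t \<le> q y" using mono[of y t] y by auto
        qed
      qed simp
      then show ?thesis .
    qed
    have "q y \<le> (g x - g y) / (x - y)"
    proof (cases "x = 1/2")
      case True
      have eq: "(g y - g (1/2)) / (y - 1/2) = (g (1/2) - g y) / (1/2 - y)"
        by (metis minus_diff_eq minus_divide_divide)
      from True have "x = 1/2" by simp
      then show ?thesis by (simp only: q_def eq order_refl)
    next
      case False
      then show ?thesis
        using convex_on_slope_le(1)[OF fc, of y "1/2" x] y yx unfolding qf f_def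
        by (auto simp: divide_simps) argo
    qed
    with Lq have "left_deriv g (1/2) \<le> (g x - g y) / (x - y)" by linarith
    then show ?thesis using yx by (simp add: pos_le_divide_eq)
  qed
qed

lemma dmax_bound:
  assumes cv: "concave_on {0..1} g" and a: "a \<in> {0..1}" and b: "b \<in> {0..1}"
  shows "\<bar>g a - g b\<bar> \<le> d_max g" "0 \<le> d_max g"
proof -
  define m where "m = min (g 0) (g 1)"
  have lo: "m \<le> g t" if "t \<in> {0..1}" for t
    using concave_on_ge_min[OF cv that] unfolding m_def .
  have hi: "g t \<le> 2 * g (1/2) - m" if t: "t \<in> {0..1}" for t
  proof -
    have "(1 - 1/2) * g t + (1/2) * g (1 - t) \<le> g ((1 - 1/2) *\<^sub>R t + (1/2) *\<^sub>R (1 - t))"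
      by (rule concave_onD[OF cv]) (use t in auto)
    also have "(1 - 1/2) *\<^sub>R t + (1/2) *\<^sub>R (1 - t) = (1/2::real)" by (simp add: field_simps)
    finally show ?thesis using lo[of "1 - t"] t by auto
  qed
  have bdd: "bdd_above ((\<lambda>p. \<bar>g (fst p) - g (snd p)\<bar>) ` ({0..1} \<times> {0..1}))"
  proof (rule bdd_aboveI2)
    fix p :: "real \<times> real" assume "p \<in> {0..1} \<times> {0..1}"
    then show "\<bar>g (fst p) - g (snd p)\<bar> \<le> 2 * g (1/2) - m - m"
      using lo[of "fst p"] hi[of "fst p"] lo[of "snd p"] hi[of "snd p"] by (auto simp: mem_Times_iff)
  qed
  have "\<bar>g (fst (a,b)) - g (snd (a,b))\<bar> \<le> d_max g"
    unfolding d_max_def by (rule cSUP_upper[OF _ bdd]) (use a b in auto)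
  then show "\<bar>g a - g b\<bar> \<le> d_max g" by simp
  have z: "(0::real,0::real) \<in> {0..1}\<times>{0..1}" by simp
  have "\<bar>g (fst (0::real,0::real)) - g (snd (0::real,0::real))\<bar> \<le> d_max g"
    unfolding d_max_def by (rule cSUP_upper[OF z bdd])
  then show "0 \<le> d_max g" by simp
qed

theorem mainTheorem18:
  fixes g :: "real \<Rightarrow> real" and M :: "'a measure" and P :: "'a set set"
    and E F :: "'a set"
  assumes "g \<in> G0"
    and "prob_space M"
    and "finite_meas_partition M P"
    and "E \<in> P" and "0 < measure M E" and "measure M E < 1"
    and "F \<in> sets M"
  shows "g_entropy g M P \<ge> g_entropy_restr g M F P - \<bar>left_deriv g (1/2)\<bar> - d_max g"
proof -
  interpret prob_space M by fact
  have cv: "concave_on {0..1} g" using assms(1) unfolding G0_def by auto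
  have fin: "finite P" and Psets: "P \<subseteq> sets M" and dj: "disjoint P" and un: "\<Union>P = space M"
    using assms(3) unfolding finite_meas_partition_def by auto
  define a where "a = (\<lambda>A. measure M A)"
  define b where "b = (\<lambda>A. measure M (A \<inter> F))"
  define L where "L = left_deriv g (1/2)"
  define D where "D = d_max g"
  have a01: "a A \<in> {0..1}" for A unfolding a_def by simp
  have b01: "b A \<in> {0..1}" for A unfolding b_def by simp
  have ba: "b A \<le> a A" if "A \<in> P" for A
    unfolding a_def b_def using that Psets assms(7) by (intro finite_measure_mono) auto
  have sum1: "(\<Sum>A\<in>P. a A) = 1"
  proof -
    have "measure M (\<Union>(id ` P)) = (\<Sum>A\<in>P. measure M (id A))"
      by (rule finite_measure_finite_Union) (use fin Psets dj in \<open>auto simp: disjoint_def disjoint_family_on_def\<close>)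
    then show ?thesis using un unfolding a_def by (simp add: prob_space)
  qed
  define S where "S = {A\<in>P. a A \<le> 1/2}"
  define T where "T = {A\<in>P. \<not> a A \<le> 1/2}"
  have finS: "finite S" and finT: "finite T" using fin unfolding S_def T_def by auto
  have ST: "S \<inter> T = {}" "P = S \<union> T" unfolding S_def T_def by auto
  have cardT: "card T \<le> 1"
  proof -
    have "A = B" if "A \<in> T" "B \<in> T" for A B
    proof (rule ccontr)
      assume "A \<noteq> B"
      then have "(\<Sum>C\<in>{A,B}. a C) \<le> (\<Sum>C\<in>P. a C)"
        using that fin a01 unfolding T_def by (intro sum_mono2) auto
      then show False using that \<open>A \<noteq> B\<close> unfolding T_def sum1 by auto
    qed
    then show ?thesis using card_le_Suc0_iff_eq[OF finT] by auto
  qed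
  have D0: "0 \<le> D" unfolding D_def using dmax_bound(2)[OF cv, of 0 0] by simp
  have "g_entropy g M P - g_entropy_restr g M F P = (\<Sum>A\<in>P. g (a A) - g (b A))"
    unfolding g_entropy_def g_entropy_restr_def a_def b_def by (simp add: sum_subtractf)
  also have "\<dots> = (\<Sum>A\<in>S. g (a A) - g (b A)) + (\<Sum>A\<in>T. g (a A) - g (b A))"
    unfolding ST(2) by (rule sum.union_disjoint[OF finS finT ST(1)])
  also have "(\<Sum>A\<in>S. g (a A) - g (b A)) \<ge> (\<Sum>A\<in>S. - \<bar>L\<bar> * (a A - b A))"
  proof (rule sum_mono)
    fix A assume A: "A \<in> S"
    then have "L * (a A - b A) \<le> g (a A) - g (b A)"
      unfolding L_def using key[OF cv, of "b A" "a A"] ba[of A] b01[of A] unfolding S_def by auto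
    moreover have "- \<bar>L\<bar> * (a A - b A) \<le> L * (a A - b A)"
      using ba[of A] A unfolding S_def by (intro mult_right_mono) auto
    ultimately show "- \<bar>L\<bar> * (a A - b A) \<le> g (a A) - g (b A)" by linarith
  qed
  moreover have "(\<Sum>A\<in>S. - \<bar>L\<bar> * (a A - b A)) \<ge> - \<bar>L\<bar>"
  proof -
    have "(\<Sum>A\<in>S. a A - b A) \<le> (\<Sum>A\<in>S. a A)"
      using b01 by (intro sum_mono) auto
    also have "\<dots> \<le> (\<Sum>A\<in>P. a A)"
      using fin a01 unfolding S_def by (intro sum_mono2) auto
    finally have "(\<Sum>A\<in>S. a A - b A) \<le> 1" using sum1 by simp
    then have "\<bar>L\<bar> * (\<Sum>A\<in>S. a A - b A) \<le> \<bar>L\<bar> * 1" by (intro mult_left_mono) auto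
    then show ?thesis by (simp add: sum_distrib_left sum_negf)
  qed
  moreover have "(\<Sum>A\<in>T. g (a A) - g (b A)) \<ge> - D"
  proof -
    have "(\<Sum>A\<in>T. g (a A) - g (b A)) \<ge> (\<Sum>A\<in>T. - D)"
    proof (rule sum_mono)
      fix A show "- D \<le> g (a A) - g (b A)"
        using dmax_bound(1)[OF cv a01[of A] b01[of A]] unfolding D_def by linarith
    qed
    moreover have "(\<Sum>A\<in>T. - D) \<ge> - D"
      using cardT D0 by (simp add: mult_left_le_one_le) 
    ultimately show ?thesis by linarith
  qed
  ultimately show ?thesis unfolding L_def D_def by linarith
qed

end
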